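(* There is a constant $C$ (depending only on $r$) such that for all $N\ge1$, all $0<\delta<1/2$ and all $0<S\le\frac13N^{1-r}$, $$\sum_{k=1}^N P\Big(W_k\Big(\frac kN\Big)^r\ge\frac{(1+\delta)S}{N}\Big)\ge -C+g(S)\big(1-C\delta-Ce^{-S/2}\big),$$ where $g(S)=r\,\Gamma\!\big(\tfrac{2-r}{1-r}\big)\,N\,S^{-1/(1-r)}$.
   Context: Fix $r\in(0,1)$. $W_1,W_2,\dots$ are independent random variables with $W_1=1$ and, for $k\ge2$, $P(W_k>0)=r$ and, conditional on $W_k>0$, $W_k\sim\mathrm{Beta}(1,k-1)$. (These arise as $W_k=\lim_{N\to\infty}V_{k,N}$ in the multitype Yule process with new-type probability $r$, where $V_{k,N}$ is the fraction of type-$k$ individuals among those with type in $\{1,\dots,k\}$ when the population has size $N$.) *)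

theory Defs
  imports "HOL-Probability.Probability"
begin

definition beta1_density :: "nat \<Rightarrow> real \<Rightarrow> real" where
  "beta1_density k x = indicator {0..1} x * real (k - 1) * (1 - x) ^ (k - 2)"

definition beta1_measure :: "nat \<Rightarrow> real measure" where
  "beta1_measure k = density lborel (\<lambda>x. ennreal (beta1_density k x))"

text \<open>Law of W_k: W_1 = 1; for k \<ge> 2, W_k = 0 with probability 1 - r and,
  with probability r, W_k > 0 and W_k ~ Beta(1, k-1).
  W_prob r k A is P(W_k \<in> A) for a Borel set A.\<close>
definition W_prob :: "real \<Rightarrow> nat \<Rightarrow> real set \<Rightarrow> real" where
  "W_prob r k A = (if k = 1 then indicator A 1
                   else (1 - r) * indicator A 0 + r * measure (beta1_measure k) A)"

definition g_fun :: "real \<Rightarrow> nat \<Rightarrow> real \<Rightarrow> real" where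
  "g_fun r N S = r * Gamma ((2 - r) / (1 - r)) * real N * S powr (- 1 / (1 - r))"

end

theory Submission
  imports Defs
begin

lemma beta_tail:
  assumes k: "k \<ge> 2" and c: "0 \<le> c" "c \<le> 1"
  shows "measure (beta1_measure k) {c..} = (1 - c) ^ (k - 1)"
proof -
  let ?h = "\<lambda>x::real. real (k - 1) * (1 - x) ^ (k - 2)"
  have deriv: "((\<lambda>x. - ((1 - x) ^ (k - 1))) has_vector_derivative ?h x) (at x within {c..1})" for x
  proof -
    have "k - 1 = Suc (k - 2)" using k by simp
    show ?thesis
      unfolding has_real_derivative_iff_has_vector_derivative[symmetric]
      apply (rule derivative_eq_intros refl)+
      using k by (simp add: \<open>k - 1 = Suc (k - 2)\<close> numeral_2_eq_2)
  qed
  have hi: "(?h has_integral ((1 - c) ^ (k - 1))) {c..1}"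
    using fundamental_theorem_of_calculus[OF c(2) deriv] k by (simp add: zero_power)
  have "emeasure (beta1_measure k) {c..} = (\<integral>\<^sup>+ x. ennreal (beta1_density k x) * indicator {c..} x \<partial>lborel)"
    unfolding beta1_measure_def beta1_density_def by (subst emeasure_density) auto
  also have "\<dots> = (\<integral>\<^sup>+ x. ennreal (?h x) * indicator {c..1} x \<partial>lborel)"
    by (intro nn_integral_cong) (use c in \<open>auto simp: beta1_density_def indicator_def\<close>)
  also have "\<dots> = ennreal ((1 - c) ^ (k - 1))"
    by (rule nn_integral_has_integral_lebesgue'[OF _ hi]) auto
  finally show ?thesis unfolding measure_def using c by simp
qed

lemma W_term:
  assumes k: "k \<ge> 2" and x: "x > 0" and t: "t > 0" "t / x \<le> 1"
  shows "W_prob r k {w. t \<le> w * x} = r * (1 - t / x) ^ (k - 1)"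
proof -
  have A: "{w. t \<le> w * x} = {t / x..}" using x by (auto simp: pos_divide_le_eq)
  have "0 \<notin> {w. t \<le> w * x}" using t by auto
  then show ?thesis using k t x unfolding W_prob_def A
    by (simp add: beta_tail)
qed

lemma pointwise:
  fixes r b u :: real and k :: nat
  assumes r: "0 < r" "r < 1" and b: "0 < b" "b < 1/2" and k: "k \<ge> 2"
    and u: "b * real (k - 1) powr (1 - r) \<le> u" "u \<le> b * real k powr (1 - r)"
  shows "exp (- u) * (1 - 2 * b powr (1 / (1 - r)) * u powr (2 - 1 / (1 - r)))
           \<le> (1 - b * real k powr (- r)) ^ (k - 1)"
proof -
  define \<alpha> where "\<alpha> = 1 / (1 - r)"
  have \<alpha>p: "(1 - r) * \<alpha> = 1" using r by (simp add: \<alpha>_def)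
  have \<alpha>1: "\<alpha> > 1" using r by (simp add: \<alpha>_def)
  have k1: "real (k - 1) \<ge> 1" using k by simp
  have upos: "u > 0" using u(1) b k1 by (smt (verit) mult_pos_pos powr_gt_zero)
  define t where "t = (u / b) powr \<alpha>"
  have "(real (k - 1) powr (1 - r)) \<le> u / b" using u(1) b by (simp add: pos_le_divide_eq mult.commute)
  then have "(real (k - 1) powr (1 - r)) powr \<alpha> \<le> t" unfolding t_def
    using \<alpha>1 by (intro powr_mono2) auto
  then have tk1: "real (k - 1) \<le> t" using k1 \<alpha>p by (simp add: powr_powr)
  have "u / b \<le> real k powr (1 - r)" using u(2) b by (simp add: pos_divide_le_eq mult.commute)
  then have "t \<le> (real k powr (1 - r)) powr \<alpha>" unfolding t_def
    using \<alpha>1 upos b by (intro powr_mono2) auto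
  then have tk: "t \<le> real k" using k \<alpha>p by (simp add: powr_powr)
  have t1: "t \<ge> 1" using tk1 k1 by linarith
  define x where "x = b * t powr (- r)"
  have xpos: "x > 0" using b t1 by (simp add: x_def)
  have "t powr (- r) \<le> 1" using powr_mono[of "-r" 0 t] t1 r by simp
  then have xb: "x \<le> b" using b by (simp add: x_def mult_left_le)
  have "real k powr (- r) \<le> t powr (- r)" using t1 tk r by (intro powr_mono2') auto
  then have kx: "b * real k powr (- r) \<le> x" using b by (simp add: x_def)
  have "(1 - x) ^ (k - 1) \<le> (1 - b * real k powr (- r)) ^ (k - 1)"
    using kx xb b by (intro power_mono) auto
  moreover have "(1 - x) powr t \<le> (1 - x) ^ (k - 1)"
  proof -
    have "(1 - x) powr t \<le> (1 - x) powr real (k - 1)"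
      using xpos xb b tk1 by (intro powr_mono') auto
    also have "\<dots> = (1 - x) ^ (k - 1)" using xb b by (simp add: powr_realpow)
    finally show ?thesis .
  qed
  moreover have "exp (- (t * x)) * (1 - 2 * (t * x ^ 2)) \<le> (1 - x) powr t"
  proof -
    have "- x - 2 * x^2 \<le> ln (1 - x)" using xpos xb b by (intro ln_one_minus_pos_lower_bound) auto
    then have "t * (- x - 2 * x^2) \<le> t * ln (1 - x)" using t1 by (intro mult_left_mono) auto
    then have "exp (- (t * x) - 2 * (t * x^2)) \<le> (1 - x) powr t"
      using xb b by (simp add: powr_def algebra_simps)
    moreover have "exp (- (t * x)) * (1 - 2 * (t * x ^ 2)) \<le> exp (- (t * x) - 2 * (t * x^2))"
    proof -
      have "1 - 2 * (t * x ^ 2) \<le> exp (- (2 * (t * x^2)))" using exp_ge_add_one_self[of "- (2 * (t * x^2))"] by simp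
      then have "exp (- (t * x)) * (1 - 2 * (t * x ^ 2)) \<le> exp (- (t * x)) * exp (- (2 * (t * x^2)))"
        by (intro mult_left_mono) auto
      then show ?thesis by (simp add: exp_add[symmetric])
    qed
    ultimately show ?thesis by linarith
  qed
  moreover have "t * x = u"
  proof -
    have "t * x = b * (t powr 1 * t powr (- r))" using t1 by (simp add: x_def)
    also have "\<dots> = b * t powr (1 - r)" by (simp only: powr_add[symmetric]) simp
    also have "\<dots> = b * (u / b) powr ((1 - r) * \<alpha>)" by (simp add: t_def powr_powr mult.commute)
    also have "\<dots> = u" using \<alpha>p b upos by simp
    finally show ?thesis .
  qed
  moreover have "t * x ^ 2 = b powr \<alpha> * u powr (2 - \<alpha>)"
  proof -
    have "t * x ^ 2 = b^2 * (t powr 1 * t powr (- r) * t powr (- r))" using t1 by (simp add: x_def power2_eq_square)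
    also have "\<dots> = b^2 * t powr (1 - 2 * r)" by (simp only: powr_add[symmetric]) simp
    also have "\<dots> = b^2 * (u / b) powr (\<alpha> * (1 - 2 * r))" by (simp add: t_def powr_powr)
    also have "\<alpha> * (1 - 2 * r) = 2 - \<alpha>" using r by (simp add: \<alpha>_def field_simps)
    also have "b^2 * (u / b) powr (2 - \<alpha>) = b powr \<alpha> * u powr (2 - \<alpha>)"
    proof -
      have e1: "(u / b) powr (2 - \<alpha>) = u powr (2 - \<alpha>) / b powr (2 - \<alpha>)" using b upos by (simp add: powr_divide)
      have e2: "b powr (2 - \<alpha>) * b powr \<alpha> = b^2" using b by (simp only: powr_add[symmetric]) (simp add: powr_numeral)
      have "b powr (2 - \<alpha>) > 0" using b by simp
      then show ?thesis unfolding e1 e2[symmetric] by (simp add: field_simps)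
    qed
    finally show ?thesis .
  qed
  ultimately have "exp (- u) * (1 - 2 * (b powr \<alpha> * u powr (2 - \<alpha>))) \<le> (1 - b * real k powr (- r)) ^ (k - 1)"
    by (metis order_trans)
  then show ?thesis unfolding \<alpha>_def by (simp add: mult.assoc)
qed

definition Fb :: "real \<Rightarrow> real \<Rightarrow> real \<Rightarrow> real" where
  "Fb r b u = (1 / (1 - r)) * b powr (- (1 / (1 - r))) * (u powr (1 / (1 - r) - 1) / exp u)
     - 2 * (1 / (1 - r)) * (u / exp u)"

lemma Fb_cont: "b > 0 \<Longrightarrow> continuous_on {b..} (Fb r b)"
  unfolding Fb_def by (intro continuous_intros) auto

lemma Fb_int: "b > 0 \<Longrightarrow> b \<le> x \<Longrightarrow> Fb r b integrable_on {x..y}"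
  by (rule integrable_continuous_interval, rule continuous_on_subset[OF Fb_cont]) auto

lemma powr_piece:
  fixes x y a :: real
  assumes "0 \<le> x" "x \<le> y" "a > 0"
  shows "integral {x..y} (\<lambda>u. u powr (a - 1)) = (y powr a - x powr a) / a"
proof -
  have hy: "((\<lambda>u. u powr (a - 1)) has_integral (y powr a / a)) {0..y}"
    using has_integral_powr_from_0[of "a - 1" y] assms by simp
  have hx: "((\<lambda>u. u powr (a - 1)) has_integral (x powr a / a)) {0..x}"
    using has_integral_powr_from_0[of "a - 1" x] assms by simp
  have "integral {0..x} (\<lambda>u. u powr (a - 1)) + integral {x..y} (\<lambda>u. u powr (a - 1))
       = integral {0..y} (\<lambda>u. u powr (a - 1))"
    by (rule Henstock_Kurzweil_Integration.integral_combine) (use assms hy in \<open>auto simp: has_integral_integrable\<close>)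
  then show ?thesis using integral_unique[OF hy] integral_unique[OF hx] by (simp add: diff_divide_distrib)
qed

lemma Fb_piece:
  fixes r b :: real and k :: nat
  assumes r: "0 < r" "r < 1" and b: "0 < b" "b < 1/2" and k: "k \<ge> 2"
  shows "integral {b * real (k - 1) powr (1 - r) .. b * real k powr (1 - r)} (Fb r b)
           \<le> (1 - b * real k powr (- r)) ^ (k - 1)"
proof -
  define \<alpha> where "\<alpha> = 1 / (1 - r)"
  have \<alpha>p: "(1 - r) * \<alpha> = 1" using r by (simp add: \<alpha>_def)
  have \<alpha>1: "\<alpha> > 1" using r by (simp add: \<alpha>_def)
  define x where "x = b * real (k - 1) powr (1 - r)"
  define y where "y = b * real k powr (1 - r)"
  define c where "c = (1 - b * real k powr (- r)) ^ (k - 1)"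
  have k1: "real (k - 1) \<ge> 1" using k by simp
  have xb: "b \<le> x" unfolding x_def using b k1 r by (simp add: ge_one_powr_ge_zero)
  have xy: "x \<le> y" unfolding x_def y_def using b k1 r by (intro mult_left_mono powr_mono2) auto
  have c0: "c \<ge> 0" unfolding c_def
  proof (intro zero_le_power)
    have "real k powr (- r) \<le> 1" using powr_mono[of "-r" 0 "real k"] k r by simp
    then have "b * real k powr (- r) \<le> b" using b by (intro mult_left_le) auto
    then show "0 \<le> 1 - b * real k powr - r" using b by linarith
  qed
  have le: "Fb r b u \<le> c * \<alpha> * b powr (- \<alpha>) * u powr (\<alpha> - 1)" if u: "u \<in> {x..y}" for u
  proof -
    have upos: "u > 0" using u xb b by auto
    have pw: "exp (- u) * (1 - 2 * b powr \<alpha> * u powr (2 - \<alpha>)) \<le> c"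
      using pointwise[OF r b k, of u] u unfolding c_def x_def y_def \<alpha>_def by auto
    have nn: "\<alpha> * b powr (- \<alpha>) * u powr (\<alpha> - 1) \<ge> 0" using \<alpha>1 by simp
    have "Fb r b u = \<alpha> * b powr (- \<alpha>) * u powr (\<alpha> - 1) * (exp (- u) * (1 - 2 * b powr \<alpha> * u powr (2 - \<alpha>)))"
    proof -
      have "b powr (- \<alpha>) * b powr \<alpha> = 1" using b by (simp add: powr_minus)
      moreover have "u powr (\<alpha> - 1) * u powr (2 - \<alpha>) = u"
        using upos by (simp only: powr_add[symmetric]) simp
      ultimately show ?thesis unfolding Fb_def \<alpha>_def[symmetric]
        by (simp add: exp_minus field_simps)
    qed
    also have "\<dots> \<le> \<alpha> * b powr (- \<alpha>) * u powr (\<alpha> - 1) * c" using nn pw by (intro mult_left_mono)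
    finally show ?thesis by (simp add: mult_ac)
  qed
  have "integral {x..y} (Fb r b) \<le> integral {x..y} (\<lambda>u. c * \<alpha> * b powr (- \<alpha>) * u powr (\<alpha> - 1))"
    using le b xb by (intro integral_le Fb_int integrable_continuous_interval continuous_intros) auto
  also have "\<dots> = c * \<alpha> * b powr (- \<alpha>) * ((y powr \<alpha> - x powr \<alpha>) / \<alpha>)"
    using powr_piece[of x y \<alpha>] xb xy b \<alpha>1 by simp
  also have "y powr \<alpha> - x powr \<alpha> = b powr \<alpha>"
  proof -
    have "y powr \<alpha> = b powr \<alpha> * real k" unfolding y_def using b k \<alpha>p
      by (simp add: powr_mult powr_powr)
    moreover have "x powr \<alpha> = b powr \<alpha> * real (k - 1)" unfolding x_def using b k1 \<alpha>p
      by (simp add: powr_mult powr_powr)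
    ultimately show ?thesis using k by (simp add: of_nat_diff algebra_simps)
  qed
  also have "c * \<alpha> * b powr (- \<alpha>) * (b powr \<alpha> / \<alpha>) = c"
    using b \<alpha>1 by (simp add: powr_minus field_simps)
  finally show ?thesis unfolding x_def y_def c_def .
qed

lemma Fb_sum:
  fixes r b :: real and n :: nat
  assumes r: "0 < r" "r < 1" and b: "0 < b" "b < 1/2" and n: "n \<ge> 1"
  shows "integral {b .. b * real n powr (1 - r)} (Fb r b)
           \<le> (\<Sum>k=2..n. (1 - b * real k powr (- r)) ^ (k - 1))"
  using n
proof (induction n rule: dec_induct)
  case base
  then show ?case by simp
next
  case (step n)
  have mono: "b * real n powr (1 - r) \<le> b * real (Suc n) powr (1 - r)"
    using b r step(1) by (intro mult_left_mono powr_mono2) auto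
  have bn: "b \<le> b * real n powr (1 - r)"
    using b r step(1) by (simp add: ge_one_powr_ge_zero)
  have "integral {b .. b * real (Suc n) powr (1 - r)} (Fb r b)
        = integral {b .. b * real n powr (1 - r)} (Fb r b)
          + integral {b * real n powr (1 - r) .. b * real (Suc n) powr (1 - r)} (Fb r b)"
    by (rule Henstock_Kurzweil_Integration.integral_combine[symmetric])
       (use mono bn b in \<open>auto intro: Fb_int\<close>)
  also have "\<dots> \<le> (\<Sum>k=2..n. (1 - b * real k powr (- r)) ^ (k - 1))
                  + (1 - b * real (Suc n) powr (- r)) ^ (Suc n - 1)"
    using step.IH Fb_piece[OF r b, of "Suc n"] step(1) by (intro add_mono) auto
  also have "\<dots> = (\<Sum>k=2..Suc n. (1 - b * real k powr (- r)) ^ (k - 1))"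
    using step(1) by (simp add: sum.cl_ivl_Suc)
  finally show ?case .
qed

lemma ue_bound:
  fixes x y :: real
  assumes "0 \<le> x" "x \<le> y"
  shows "integral {x..y} (\<lambda>u. u / exp u) \<le> 1"
proof -
  have d: "((\<lambda>u. - ((1 + u) * exp (- u))) has_vector_derivative (u / exp u)) (at u within {x..y})" for u
    unfolding has_real_derivative_iff_has_vector_derivative[symmetric]
    by (rule derivative_eq_intros refl)+ (simp add: exp_minus field_simps)
  have "integral {x..y} (\<lambda>u. u / exp u) = (1 + x) * exp (- x) - (1 + y) * exp (- y)"
    using integral_unique[OF fundamental_theorem_of_calculus[OF assms(2) d]] by simp
  also have "\<dots> \<le> (1 + x) * exp (- x)" using assms by simp
  also have "\<dots> \<le> 1"
  proof -
    have "1 + x \<le> exp x" by (rule exp_ge_add_one_self)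
    then show ?thesis by (simp add: exp_minus field_simps)
  qed
  finally show ?thesis .
qed

lemma powr_exp_bound:
  fixes \<alpha> :: real
  assumes "\<alpha> > 1"
  shows "\<exists>K>0. \<forall>t\<ge>0. t powr (\<alpha> - 1) \<le> K * exp (t / 2)"
proof -
  define m where "m = nat \<lceil>\<alpha>\<rceil>"
  have c: "\<alpha> \<le> of_int \<lceil>\<alpha>\<rceil>" by (rule le_of_int_ceiling)
  have cp: "\<lceil>\<alpha>\<rceil> \<ge> 1" using c assms by linarith
  have rm: "real m = of_int \<lceil>\<alpha>\<rceil>" using cp by (simp add: m_def)
  have m1: "m \<ge> 1" using cp unfolding m_def by linarith
  have am: "\<alpha> - 1 \<le> real m" using c rm by linarith
  define K where "K = (2 * real m) ^ m + 1"
  have K1: "K \<ge> 1" by (simp add: K_def)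
  have "t powr (\<alpha> - 1) \<le> K * exp (t / 2)" if t: "t \<ge> 0" for t
  proof (cases "t \<le> 1")
    case True
    have "t powr (\<alpha> - 1) \<le> 1" using t True assms by (intro powr_le1) auto
    also have "1 \<le> K * exp (t / 2)"
    proof -
      have "1 \<le> exp (t / 2)" using t by simp
      then show ?thesis using K1 mult_mono[of 1 K 1 "exp (t / 2)"] by simp
    qed
    finally show ?thesis .
  next
    case False
    have "t powr (\<alpha> - 1) \<le> t powr real m" using False am by (intro powr_mono) auto
    also have "\<dots> = t ^ m" using False by (simp add: powr_realpow)
    also have "\<dots> = (2 * real m) ^ m * (t / (2 * real m)) ^ m" using m1 by (simp add: power_divide)
    also have "\<dots> \<le> (2 * real m) ^ m * exp (t / (2 * real m)) ^ m"
      using False m1 by (intro mult_left_mono power_mono) (auto intro: order.trans[OF _ exp_ge_add_one_self])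
    also have "exp (t / (2 * real m)) ^ m = exp (t / 2)"
      using m1 by (simp add: exp_of_nat_mult[symmetric])
    also have "(2 * real m) ^ m * exp (t / 2) \<le> K * exp (t / 2)" by (simp add: K_def)
    finally show ?thesis .
  qed
  then show ?thesis using K1 by (intro exI[of _ K]) auto
qed

lemma gamma_lower:
  fixes \<alpha> :: real
  assumes a: "\<alpha> > 1"
  shows "\<exists>K>0. \<forall>b T. 0 < b \<longrightarrow> b \<le> T \<longrightarrow>
           Gamma \<alpha> - b powr \<alpha> / \<alpha> - 2 * K * exp (- T / 2) \<le> integral {b..T} (\<lambda>u. u powr (\<alpha> - 1) / exp u)"
proof -
  obtain K where K: "K > 0" "\<And>t. t \<ge> 0 \<Longrightarrow> t powr (\<alpha> - 1) \<le> K * exp (t / 2)"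
    using powr_exp_bound[OF a] by blast
  have "Gamma \<alpha> - b powr \<alpha> / \<alpha> - 2 * K * exp (- T / 2) \<le> integral {b..T} (\<lambda>u. u powr (\<alpha> - 1) / exp u)"
    if b: "0 < b" "b \<le> T" for b T
  proof -
    define G where "G = (\<lambda>u::real. u powr (\<alpha> - 1) / exp u)"
    define M where "M = integral {b..T} G"
    have Gint: "G integrable_on {b..T}" unfolding G_def using b
      by (intro integrable_continuous_interval continuous_intros) auto
    have Mnn: "M \<ge> 0" unfolding M_def G_def by (intro integral_nonneg Gint[unfolded G_def]) auto
    have h1: "((\<lambda>u. u powr (\<alpha> - 1)) has_integral (b powr \<alpha> / \<alpha>)) {0..b}"
      using has_integral_powr_from_0[of "\<alpha> - 1" b] a b by simp
    have h3: "((\<lambda>u. K * exp (- (1/2) * u)) has_integral (K * (exp (- (1/2) * T) / (1/2)))) {T..}"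
      by (intro has_integral_mult_right has_integral_exp_minus_to_infinity) auto
    have n1: "(\<integral>\<^sup>+ u. ennreal (u powr (\<alpha> - 1)) * indicator {0..b} u \<partial>lborel) = ennreal (b powr \<alpha> / \<alpha>)"
      by (rule nn_integral_has_integral_lebesgue'[OF _ h1]) auto
    have n2: "(\<integral>\<^sup>+ u. ennreal (G u) * indicator {b..T} u \<partial>lborel) = ennreal M"
      unfolding M_def by (rule nn_integral_has_integral_lebesgue'[OF _ integrable_integral[OF Gint]])
         (auto simp: G_def)
    have n3: "(\<integral>\<^sup>+ u. ennreal (K * exp (- (1/2) * u)) * indicator {T..} u \<partial>lborel)
               = ennreal (K * (exp (- (1/2) * T) / (1/2)))"
      by (rule nn_integral_has_integral_lebesgue'[OF _ h3]) (use K in auto)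
    have pt: "ennreal (indicator {0..} t * t powr (\<alpha> - 1) / exp t)
              \<le> ennreal (t powr (\<alpha> - 1)) * indicator {0..b} t + ennreal (G t) * indicator {b..T} t
                 + ennreal (K * exp (- (1/2) * t)) * indicator {T..} t" for t
    proof (cases "t < 0")
      case True then show ?thesis by simp
    next
      case False
      show ?thesis
      proof (cases "t \<le> b")
        case True
        have "1 \<le> exp t" using False by simp
        then have "t powr (\<alpha> - 1) / exp t \<le> t powr (\<alpha> - 1)"
          using mult_left_mono[of 1 "exp t" "t powr (\<alpha> - 1)"] by (simp add: divide_le_eq)
        then show ?thesis using True False
          by (simp add: indicator_def) (metis add_increasing2 ennreal_leI zero_le)
      next
        case nb: False
        show ?thesis
        proof (cases "t \<le> T")
          case True
          then show ?thesis using nb False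
            by (simp add: indicator_def G_def)
        next
          case nT: False
          have "t powr (\<alpha> - 1) \<le> K * exp (t / 2)" using K(2) False by simp
          then have "t powr (\<alpha> - 1) / exp t \<le> K * exp (- (1/2) * t)"
            by (simp add: divide_le_eq mult.assoc exp_add[symmetric])
          then show ?thesis using nb nT False b
            by (simp add: indicator_def) (metis add_increasing ennreal_leI zero_le)
        qed
      qed
    qed
    have "ennreal (Gamma \<alpha>) = (\<integral>\<^sup>+ t. ennreal (indicator {0..} t * t powr (\<alpha> - 1) / exp t) \<partial>lborel)"
      using Gamma_conv_nn_integral_real[of \<alpha>] a by simp
    also have "\<dots> \<le> (\<integral>\<^sup>+ t. ennreal (t powr (\<alpha> - 1)) * indicator {0..b} t + ennreal (G t) * indicator {b..T} t
                 + ennreal (K * exp (- (1/2) * t)) * indicator {T..} t \<partial>lborel)"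
      by (intro nn_integral_mono pt)
    also have "\<dots> = (\<integral>\<^sup>+ u. ennreal (u powr (\<alpha> - 1)) * indicator {0..b} u \<partial>lborel)
                  + (\<integral>\<^sup>+ u. ennreal (G u) * indicator {b..T} u \<partial>lborel)
                  + (\<integral>\<^sup>+ u. ennreal (K * exp (- (1/2) * u)) * indicator {T..} u \<partial>lborel)"
    proof -
      have [measurable]: "G \<in> borel_measurable borel" unfolding G_def by measurable
      have "(\<integral>\<^sup>+ t. ennreal (t powr (\<alpha> - 1)) * indicator {0..b} t + ennreal (G t) * indicator {b..T} t
                 + ennreal (K * exp (- (1/2) * t)) * indicator {T..} t \<partial>lborel)
           = (\<integral>\<^sup>+ t. ennreal (t powr (\<alpha> - 1)) * indicator {0..b} t + ennreal (G t) * indicator {b..T} t \<partial>lborel)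
            + (\<integral>\<^sup>+ u. ennreal (K * exp (- (1/2) * u)) * indicator {T..} u \<partial>lborel)"
        by (intro nn_integral_add) measurable
      also have "(\<integral>\<^sup>+ t. ennreal (t powr (\<alpha> - 1)) * indicator {0..b} t + ennreal (G t) * indicator {b..T} t \<partial>lborel)
          = (\<integral>\<^sup>+ u. ennreal (u powr (\<alpha> - 1)) * indicator {0..b} u \<partial>lborel)
                  + (\<integral>\<^sup>+ u. ennreal (G u) * indicator {b..T} u \<partial>lborel)"
        by (intro nn_integral_add) measurable
      finally show ?thesis .
    qed
    also have "\<dots> = ennreal (b powr \<alpha> / \<alpha> + M + K * (exp (- (1/2) * T) / (1/2)))"
      unfolding n1 n2 n3 using Mnn K a b by (simp add: ennreal_plus)
    finally have "Gamma \<alpha> \<le> b powr \<alpha> / \<alpha> + M + K * (exp (- (1/2) * T) / (1/2))"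
      using Mnn K a b by (subst (asm) ennreal_le_iff) auto
    then show ?thesis unfolding M_def G_def by (simp add: field_simps)
  qed
  then show ?thesis using K(1) by blast
qed

lemma core:
  fixes r b :: real and N :: nat and K :: real
  assumes r: "0 < r" "r < 1" and b: "0 < b" "b < 1/2" and N: "N \<ge> 1"
    and K: "\<forall>b T. 0 < b \<longrightarrow> b \<le> T \<longrightarrow>
           Gamma (1 / (1 - r)) - b powr (1 / (1 - r)) / (1 / (1 - r)) - 2 * K * exp (- T / 2)
             \<le> integral {b..T} (\<lambda>u. u powr (1 / (1 - r) - 1) / exp u)"
  shows "(\<Sum>k=2..N. (1 - b * real k powr (- r)) ^ (k - 1))
          \<ge> Gamma (1 / (1 - r) + 1) * b powr (- (1 / (1 - r))) - (1 + 2 * (1 / (1 - r)))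
            - 2 * (1 / (1 - r)) * K * b powr (- (1 / (1 - r))) * exp (- (b * real N powr (1 - r)) / 2)"
proof -
  define \<alpha> where "\<alpha> = 1 / (1 - r)"
  have \<alpha>1: "\<alpha> > 1" using r by (simp add: \<alpha>_def)
  define T where "T = b * real N powr (1 - r)"
  have bT: "b \<le> T" unfolding T_def using b r N by (simp add: ge_one_powr_ge_zero)
  define G where "G = (\<lambda>u::real. u powr (\<alpha> - 1) / exp u)"
  have Gint: "G integrable_on {b..T}" unfolding G_def using b
    by (intro integrable_continuous_interval continuous_intros) auto
  have Eint: "(\<lambda>u::real. u / exp u) integrable_on {b..T}"
    by (intro integrable_continuous_interval continuous_intros) auto
  have "integral {b..T} (Fb r b) = \<alpha> * b powr (- \<alpha>) * integral {b..T} G - 2 * \<alpha> * integral {b..T} (\<lambda>u. u / exp u)"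
  proof -
    have "Fb r b = (\<lambda>u. \<alpha> * b powr (- \<alpha>) * G u - 2 * \<alpha> * (u / exp u))"
      unfolding Fb_def G_def \<alpha>_def by auto
    moreover have i1: "(\<lambda>u. (\<alpha> * b powr (- \<alpha>)) * G u) integrable_on {b..T}"
      using integrable_on_cmult_left[OF Gint, of "\<alpha> * b powr (- \<alpha>)"] by simp
    moreover have i2: "(\<lambda>u. (2 * \<alpha>) * (u / exp u)) integrable_on {b..T}"
      using integrable_on_cmult_left[OF Eint, of "2 * \<alpha>"] by simp
    ultimately show ?thesis
      using Henstock_Kurzweil_Integration.integral_diff[OF i1 i2]
            integral_mult_right[where c="\<alpha> * b powr (- \<alpha>)" and S="{b..T}" and f=G]
            integral_mult_right[where c="2 * \<alpha>" and S="{b..T}" and f="\<lambda>u. u / exp u"]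
      by (simp only: mult.assoc)
  qed
  also have "\<dots> \<ge> \<alpha> * b powr (- \<alpha>) * (Gamma \<alpha> - b powr \<alpha> / \<alpha> - 2 * K * exp (- T / 2)) - 2 * \<alpha> * 1"
  proof -
    have g: "Gamma \<alpha> - b powr \<alpha> / \<alpha> - 2 * K * exp (- T / 2) \<le> integral {b..T} G"
      using K b bT unfolding G_def \<alpha>_def by blast
    have e: "integral {b..T} (\<lambda>u. u / exp u) \<le> 1" using ue_bound[of b T] b bT by simp
    have "0 \<le> \<alpha> * b powr (- \<alpha>)" using \<alpha>1 by simp
    then show ?thesis using g e \<alpha>1 by (intro diff_mono mult_left_mono) auto
  qed
  finally have I: "integral {b..T} (Fb r b) \<ge> \<alpha> * b powr (- \<alpha>) * (Gamma \<alpha> - b powr \<alpha> / \<alpha> - 2 * K * exp (- T / 2)) - 2 * \<alpha>"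
    by simp
  have "\<alpha> * b powr (- \<alpha>) * (Gamma \<alpha> - b powr \<alpha> / \<alpha> - 2 * K * exp (- T / 2)) - 2 * \<alpha>
        = Gamma (\<alpha> + 1) * b powr (- \<alpha>) - (1 + 2 * \<alpha>) - 2 * \<alpha> * K * b powr (- \<alpha>) * exp (- T / 2)"
  proof -
    have "\<alpha> \<notin> \<int>\<^sub>\<le>\<^sub>0" using \<alpha>1 by (auto elim!: nonpos_Ints_cases)
    then have "Gamma (\<alpha> + 1) = \<alpha> * Gamma \<alpha>" by (rule Gamma_plus1)
    then show ?thesis using b \<alpha>1 by (simp add: powr_minus field_simps)
  qed
  moreover have "integral {b..T} (Fb r b) \<le> (\<Sum>k=2..N. (1 - b * real k powr (- r)) ^ (k - 1))"
    unfolding T_def by (rule Fb_sum[OF r b N])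
  ultimately show ?thesis using I unfolding \<alpha>_def[symmetric] T_def[symmetric] by linarith
qed

theorem lemma4p6:
  fixes r :: real
  assumes "0 < r" and "r < 1"
  shows "\<exists>C::real. \<forall>(N::nat) (\<delta>::real) (S::real).
           N \<ge> 1 \<longrightarrow> 0 < \<delta> \<longrightarrow> \<delta> < 1/2 \<longrightarrow> 0 < S \<longrightarrow>
           S \<le> (1/3) * real N powr (1 - r) \<longrightarrow>
           (\<Sum>k=1..N. W_prob r k {w. w * (real k / real N) powr r \<ge> (1 + \<delta>) * S / real N})
             \<ge> - C + g_fun r N S * (1 - C * \<delta> - C * exp (- S / 2))"
proof -
  have r: "0 < r" "r < 1" using assms by auto
  define \<alpha> where "\<alpha> = 1 / (1 - r)"
  have \<alpha>1: "\<alpha> > 1" using r by (simp add: \<alpha>_def)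
  obtain K where K: "K > 0" and Kall: "\<forall>b T. 0 < b \<longrightarrow> b \<le> T \<longrightarrow>
           Gamma (1 / (1 - r)) - b powr (1 / (1 - r)) / (1 / (1 - r)) - 2 * K * exp (- T / 2)
             \<le> integral {b..T} (\<lambda>u. u powr (1 / (1 - r) - 1) / exp u)"
    using gamma_lower[of "1 / (1 - r)"] \<alpha>1 unfolding \<alpha>_def by blast
  define \<Gamma>1 where "\<Gamma>1 = Gamma (\<alpha> + 1)"
  have \<Gamma>1pos: "\<Gamma>1 > 0" unfolding \<Gamma>1_def using \<alpha>1 by (intro Gamma_real_pos) auto
  define C3 where "C3 = 2 * \<alpha> * K / \<Gamma>1"
  define C where "C = max (r * (1 + 2 * \<alpha>)) (max \<alpha> C3)"
  have C3nn: "C3 \<ge> 0" unfolding C3_def using \<alpha>1 K \<Gamma>1pos by simp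
  have Cge: "C \<ge> r * (1 + 2 * \<alpha>)" "C \<ge> \<alpha>" "C \<ge> C3" unfolding C_def by auto
  have main: "(\<Sum>k=1..N. W_prob r k {w. w * (real k / real N) powr r \<ge> (1 + \<delta>) * S / real N})
             \<ge> - C + g_fun r N S * (1 - C * \<delta> - C * exp (- S / 2))"
    if N: "N \<ge> 1" and d: "0 < \<delta>" "\<delta> < 1/2" and S: "0 < S" "S \<le> (1/3) * real N powr (1 - r)"
    for N \<delta> S
  proof -
    define b where "b = (1 + \<delta>) * S * real N powr (r - 1)"
    have Npos: "real N > 0" using N by simp
    have NN: "real N powr (1 - r) * real N powr (r - 1) = 1"
      using Npos by (simp only: powr_add[symmetric]) simp
    have bpos: "b > 0" unfolding b_def using d S Npos by simp
    have "b \<le> (1 + \<delta>) * ((1/3) * real N powr (1 - r)) * real N powr (r - 1)"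
      unfolding b_def using d S by (intro mult_right_mono mult_left_mono) auto
    also have "\<dots> = (1 + \<delta>) / 3" using NN by (simp add: field_simps)
    finally have bhalf: "b < 1/2" using d by simp
    have Tb: "b * real N powr (1 - r) = (1 + \<delta>) * S"
      unfolding b_def using NN by (simp add: field_simps)
    define X where "X = (\<Sum>k=2..N. (1 - b * real k powr (- r)) ^ (k - 1))"
    have sumeq: "(\<Sum>k=1..N. W_prob r k {w. w * (real k / real N) powr r \<ge> (1 + \<delta>) * S / real N})
       = W_prob r 1 {w. w * (real 1 / real N) powr r \<ge> (1 + \<delta>) * S / real N}
         + (\<Sum>k=2..N. W_prob r k {w. w * (real k / real N) powr r \<ge> (1 + \<delta>) * S / real N})"
      using N by (subst sum.atLeast_Suc_atMost) (auto simp: numeral_2_eq_2)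
    have W1: "W_prob r 1 {w. w * (real 1 / real N) powr r \<ge> (1 + \<delta>) * S / real N} \<ge> 0"
      by (simp add: W_prob_def)
    have Wk: "W_prob r k {w. w * (real k / real N) powr r \<ge> (1 + \<delta>) * S / real N}
              = r * (1 - b * real k powr (- r)) ^ (k - 1)" if k: "k \<in> {2..N}" for k
    proof -
      have kpos: "real k > 0" using k by auto
      have xpos: "(real k / real N) powr r > 0" using kpos Npos by simp
      have eq: "(1 + \<delta>) * S / real N / (real k / real N) powr r = b * real k powr (- r)"
        unfolding b_def using kpos Npos
        by (simp add: powr_divide powr_diff powr_minus field_simps)
      have "b * real k powr (- r) \<le> 1"
      proof -
        have "real k powr (- r) \<le> 1" using powr_mono[of "-r" 0 "real k"] k r by simp
        then have "b * real k powr (- r) \<le> b" using bpos by (intro mult_left_le) auto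
        then show ?thesis using bhalf by linarith
      qed
      then have le1: "(1 + \<delta>) * S / real N / (real k / real N) powr r \<le> 1" using eq by simp
      have k2: "k \<ge> 2" using k by simp
      have tpos: "(1 + \<delta>) * S / real N > 0" using d S Npos by simp
      show ?thesis using W_term[OF k2 xpos tpos le1, of r] unfolding eq by simp
    qed
    have LHS: "(\<Sum>k=1..N. W_prob r k {w. w * (real k / real N) powr r \<ge> (1 + \<delta>) * S / real N}) \<ge> r * X"
      unfolding sumeq X_def using W1 Wk by (simp add: sum_distrib_left)
    define B where "B = b powr (- \<alpha>)"
    define E where "E = exp (- ((1 + \<delta>) * S) / 2)"
    have core': "X \<ge> \<Gamma>1 * B - (1 + 2 * \<alpha>) - 2 * \<alpha> * K * B * E"
      using core[OF r bpos bhalf N Kall] unfolding X_def B_def E_def \<Gamma>1_def \<alpha>_def Tb by simp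
    define D where "D = (1 + \<delta>) powr (- \<alpha>)"
    define g where "g = g_fun r N S"
    have gdef: "g = r * \<Gamma>1 * real N * S powr (- \<alpha>)"
    proof -
      have "(2 - r) / (1 - r) = \<alpha> + 1" using r by (simp add: \<alpha>_def field_simps)
      moreover have "- 1 / (1 - r) = - \<alpha>" by (simp add: \<alpha>_def)
      ultimately show ?thesis unfolding g_def g_fun_def \<Gamma>1_def by simp
    qed
    have gnn: "g \<ge> 0" unfolding gdef using r \<Gamma>1pos by simp
    have Bdef: "B = D * S powr (- \<alpha>) * real N"
    proof -
      have "B = (1 + \<delta>) powr (- \<alpha>) * S powr (- \<alpha>) * (real N powr (r - 1)) powr (- \<alpha>)"
        unfolding B_def b_def using d S Npos by (simp add: powr_mult)
      also have "(real N powr (r - 1)) powr (- \<alpha>) = real N"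
      proof -
        have "(r - 1) * (- \<alpha>) = 1" using r by (simp add: \<alpha>_def field_simps)
        then show ?thesis using Npos by (simp add: powr_powr)
      qed
      finally show ?thesis unfolding D_def .
    qed
    have p1: "r * (\<Gamma>1 * B) = g * D" unfolding gdef Bdef by (simp add: mult_ac)
    have Dpos: "D > 0" unfolding D_def using d by simp
    have Dle1: "D \<le> 1" unfolding D_def using d \<alpha>1 powr_mono[of "- \<alpha>" 0 "1 + \<delta>"] by simp
    have Dge: "D \<ge> 1 - \<alpha> * \<delta>"
    proof -
      have "D = exp (- \<alpha> * ln (1 + \<delta>))" unfolding D_def using d by (simp add: powr_def)
      also have "\<dots> \<ge> 1 + (- \<alpha> * ln (1 + \<delta>))" by (rule exp_ge_add_one_self)
      finally have "D \<ge> 1 - \<alpha> * ln (1 + \<delta>)" by simp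
      moreover have "ln (1 + \<delta>) \<le> \<delta>" using d by (intro ln_add_one_self_le_self) auto
      ultimately show ?thesis using \<alpha>1 by (smt (verit) mult_left_mono)
    qed
    have p3: "g * D \<ge> g - C * g * \<delta>"
    proof -
      have "g * D \<ge> g * (1 - \<alpha> * \<delta>)" using gnn Dge by (intro mult_left_mono)
      moreover have "\<alpha> * \<delta> \<le> C * \<delta>" using Cge d by (intro mult_right_mono) auto
      then have "g * (\<alpha> * \<delta>) \<le> g * (C * \<delta>)" using gnn by (intro mult_left_mono)
      ultimately show ?thesis by (simp add: algebra_simps)
    qed
    have p2: "r * (2 * \<alpha> * K * B * E) \<le> C * g * exp (- S / 2)"
    proof -
      have "r * (2 * \<alpha> * K * B * E) = C3 * (g * D) * E"
        unfolding C3_def p1[symmetric] using \<Gamma>1pos by (simp add: field_simps)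
      also have "\<dots> \<le> C * g * exp (- S / 2)"
      proof -
        have "E \<le> exp (- S / 2)" unfolding E_def using d S by (simp add: mult_le_cancel_right1)
        moreover have "g * D \<le> g" using gnn Dle1 by (simp add: mult_left_le)
        moreover have "E \<ge> 0" unfolding E_def by simp
        ultimately have "(g * D) * E \<le> g * exp (- S / 2)" using gnn Dpos by (intro mult_mono) auto
        moreover have "0 \<le> (g * D) * E" using gnn Dpos \<open>E \<ge> 0\<close> by simp
        ultimately have "C3 * ((g * D) * E) \<le> C * (g * exp (- S / 2))"
          using Cge C3nn gnn by (intro mult_mono[of C3 C]) auto
        then show ?thesis by (simp add: mult_ac)
      qed
      finally show ?thesis .
    qed
    have p4: "r * (1 + 2 * \<alpha>) \<le> C" using Cge by simp
    have "r * X \<ge> r * (\<Gamma>1 * B - (1 + 2 * \<alpha>) - 2 * \<alpha> * K * B * E)"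
      using core' r by (intro mult_left_mono) auto
    then have "r * X \<ge> - C + g * (1 - C * \<delta> - C * exp (- S / 2))"
      using p1 p2 p3 p4 by (simp add: algebra_simps)
    then show ?thesis using LHS unfolding g_def by linarith
  qed
  show ?thesis by (intro exI[of _ C] allI impI main) auto
qed

end
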